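(* Let $N\ge3$, $\mu>0$, $c>0$, $p=2^*=\frac{2N}{N-2}$, and let $u\in S(c)$. Set $k_0=\frac{N^2c^2}{4}$ and $c_0=\big[\frac{N^2-2N}{4\mu}(\frac{4\mathcal S}{N^2})^{2^*/2}\big]^{1/(2^*-2)}$. If $P(u)\le0$ and $\|\nabla u\|_2^2=k_0$, then $c\ge c_0$. Consequently, if $P(u)\le0$ and $c<c_0$, then $\|\nabla u\|_2^2\ne k_0$.
   Context: $\mathcal S=\inf_{u\in D^{1,2}(\mathbb{R}^N)\setminus\{0\}}\|\nabla u\|_2^2/\|u\|_{2^*}^2$. $W=\{u\in H^1(\mathbb{R}^N):\int u^2|\log u^2|<\infty\}$, $S(c)=\{u\in W:\|u\|_2=c\}$, $P(u)=\|\nabla u\|_2^2-\mu\|u\|_{2^*}^{2^*}-\frac N2c^2$. *)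

theory Defs
  imports "HOL-Analysis.Analysis"
begin

text \<open>Functions on R^N are modelled as functions on a Euclidean space 'a with DIM('a) = N,
  equipped with Lebesgue measure.\<close>

definition partials :: "'a::euclidean_space list \<Rightarrow> ('a \<Rightarrow> real) \<Rightarrow> ('a \<Rightarrow> real)" where
  "partials bs \<phi> = fold (\<lambda>b f x. frechet_derivative f (at x) b) bs \<phi>"

definition smooth_fun :: "('a::euclidean_space \<Rightarrow> real) \<Rightarrow> bool" where
  "smooth_fun \<phi> \<longleftrightarrow> (\<forall>bs. set bs \<subseteq> Basis \<longrightarrow> (\<forall>x. partials bs \<phi> differentiable (at x)))"

definition test_fun :: "('a::euclidean_space \<Rightarrow> real) \<Rightarrow> bool" where
  "test_fun \<phi> \<longleftrightarrow> smooth_fun \<phi> \<and> compact (closure {x. \<phi> x \<noteq> 0})"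

definition loc_integrable :: "('a::euclidean_space \<Rightarrow> 'b::{banach, second_countable_topology}) \<Rightarrow> bool" where
  "loc_integrable f \<longleftrightarrow> (\<forall>K. compact K \<longrightarrow> set_integrable lebesgue K f)"

definition weak_grad :: "('a::euclidean_space \<Rightarrow> real) \<Rightarrow> ('a \<Rightarrow> 'a) \<Rightarrow> bool" where
  "weak_grad u G \<longleftrightarrow> loc_integrable u \<and> loc_integrable G \<and>
     (\<forall>\<phi>. test_fun \<phi> \<longrightarrow> (\<forall>b\<in>Basis.
        (\<integral>x. u x * frechet_derivative \<phi> (at x) b \<partial>lebesgue) = - (\<integral>x. (G x \<bullet> b) * \<phi> x \<partial>lebesgue)))"

definition grad :: "('a::euclidean_space \<Rightarrow> real) \<Rightarrow> ('a \<Rightarrow> 'a)" where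
  "grad u = (SOME G. weak_grad u G)"

definition Lp_norm :: "real \<Rightarrow> ('a::euclidean_space \<Rightarrow> real) \<Rightarrow> real" where
  "Lp_norm p u = (\<integral>x. \<bar>u x\<bar> powr p \<partial>lebesgue) powr (1 / p)"

definition memLp :: "real \<Rightarrow> ('a::euclidean_space \<Rightarrow> real) \<Rightarrow> bool" where
  "memLp p u \<longleftrightarrow> u \<in> borel_measurable lebesgue \<and> integrable lebesgue (\<lambda>x. \<bar>u x\<bar> powr p)"

definition grad_norm2 :: "('a::euclidean_space \<Rightarrow> real) \<Rightarrow> real" where
  "grad_norm2 u = (\<integral>x. (norm (grad u x))\<^sup>2 \<partial>lebesgue)"

definition crit_exp :: "nat \<Rightarrow> real" where
  "crit_exp N = 2 * real N / (real N - 2)"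

definition H1 :: "('a::euclidean_space \<Rightarrow> real) set" where
  "H1 = {u. memLp 2 u \<and> (\<exists>G. weak_grad u G \<and> G \<in> borel_measurable lebesgue
            \<and> integrable lebesgue (\<lambda>x. (norm (G x))\<^sup>2))}"

definition D12 :: "('a::euclidean_space \<Rightarrow> real) set" where
  "D12 = {u. memLp (crit_exp DIM('a)) u \<and> (\<exists>G. weak_grad u G \<and> G \<in> borel_measurable lebesgue
            \<and> integrable lebesgue (\<lambda>x. (norm (G x))\<^sup>2))}"

definition sobolev_S :: "'a::euclidean_space itself \<Rightarrow> real" where
  "sobolev_S _ = Inf {grad_norm2 u / (Lp_norm (crit_exp DIM('a)) u)\<^sup>2 | u :: 'a \<Rightarrow> real.
                     u \<in> D12 \<and> \<not> (AE x in lebesgue. u x = 0)}"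

definition W_space :: "('a::euclidean_space \<Rightarrow> real) set" where
  "W_space = {u. u \<in> H1 \<and> integrable lebesgue (\<lambda>x. (u x)\<^sup>2 * \<bar>ln ((u x)\<^sup>2)\<bar>)}"

definition S_c :: "real \<Rightarrow> ('a::euclidean_space \<Rightarrow> real) set" where
  "S_c c = {u. u \<in> W_space \<and> Lp_norm 2 u = c}"

definition P_fun :: "real \<Rightarrow> real \<Rightarrow> ('a::euclidean_space \<Rightarrow> real) \<Rightarrow> real" where
  "P_fun \<mu> c u = grad_norm2 u - \<mu> * (Lp_norm (crit_exp DIM('a)) u) powr (crit_exp DIM('a))
                  - real DIM('a) / 2 * c\<^sup>2"

end

theory Submission
  imports Defs
begin
lemma A1: "L > 0 \<Longrightarrow> ((L::real)\<^sup>2) powr (p/2) = L powr p"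
proof -
  assume L: "L > 0"
  have "L\<^sup>2 = L powr 2" using L by (simp add: powr_numeral)
  hence "(L\<^sup>2) powr (p/2) = L powr (2 * (p/2))" by (simp only: powr_powr)
  thus ?thesis by simp
qed
lemma A3: "c > 0 \<Longrightarrow> S > 0 \<Longrightarrow> N2 > 0 \<Longrightarrow> ((c::real)\<^sup>2 * (N2 / (4*S))) powr (p/2) = c powr p * (N2 / (4*S)) powr (p/2)"
proof -
  assume a: "c > 0" "S > 0" "N2 > 0"
  have "((c::real)\<^sup>2 * (N2 / (4*S))) powr (p/2) = (c\<^sup>2) powr (p/2) * (N2 / (4*S)) powr (p/2)"
    using a by (intro powr_mult) 
  thus ?thesis using A1[OF a(1)] by simp
qed
lemma A4: "c > 0 \<Longrightarrow> c powr p = (c::real)\<^sup>2 * c powr (p - 2)"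
proof -
  assume c: "c > 0"
  have "c powr p = c powr (2 + (p - 2))" by simp
  also have "\<dots> = c powr 2 * c powr (p - 2)" by (rule powr_add)
  finally have "c powr p = c powr 2 * c powr (p - 2)" .
  thus ?thesis using c by (simp add: powr_numeral)
qed
lemma A5: "c > 0 \<Longrightarrow> p > 2 \<Longrightarrow> ((c::real) powr (p - 2)) powr (1 / (p - 2)) = c"
  by (simp add: powr_powr)
lemma A6: "S > 0 \<Longrightarrow> N2 > 0 \<Longrightarrow> ((4 * S / N2)::real) powr (p / 2) * (N2 / (4*S)) powr (p/2) = 1"
proof -
  assume a: "S > 0" "N2 > 0"
  have "((4 * S / N2)::real) powr (p / 2) * (N2 / (4*S)) powr (p/2) = ((4 * S / N2) * (N2 / (4*S))) powr (p/2)"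
    using a by (intro powr_mult[symmetric])
  also have "(4 * S / N2) * (N2 / (4*S)) = 1" using a by simp
  finally show ?thesis by simp
qed

lemma key_ineq:
  fixes p c S g L \<mu> A :: real
  assumes p2: "p > 2" and c: "c > 0" and S: "S > 0" and L: "L > 0" and mu: "\<mu> > 0"
    and A: "A > 0"
    and SL: "S \<le> g / L\<^sup>2"
    and hg: "g = N2 * c\<^sup>2 / 4" and N2: "N2 > 0"
    and hP: "A * c\<^sup>2 \<le> \<mu> * L powr p"
  shows "(A / \<mu> * (4 * S / N2) powr (p / 2)) powr (1 / (p - 2)) \<le> c"
proof -
  have L2: "L\<^sup>2 > 0" using L by simp
  have "S * L\<^sup>2 \<le> g" using SL L2 by (simp add: pos_le_divide_eq)
  hence "L\<^sup>2 \<le> g / S" using S by (simp add: pos_le_divide_eq mult.commute)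
  hence "(L\<^sup>2) powr (p/2) \<le> (g/S) powr (p/2)"
    by (intro powr_mono2[of "p/2" "L\<^sup>2" "g/S"]) (use p2 L2 in auto)
  moreover have "(L\<^sup>2) powr (p/2) = L powr p" by (rule A1[OF L])
  moreover have "(g/S) = c\<^sup>2 * (N2 / (4*S))" using S by (simp add: hg field_simps)
  moreover have "(c\<^sup>2 * (N2 / (4*S))) powr (p/2) = c powr p * (N2 / (4*S)) powr (p/2)"
    by (rule A3[OF c S N2])
  ultimately have Lp: "L powr p \<le> c powr p * (N2 / (4*S)) powr (p/2)" by simp
  have inv: "(4 * S / N2) powr (p / 2) * (N2 / (4*S)) powr (p/2) = 1" by (rule A6[OF S N2])
  define Q where "Q = (4 * S / N2) powr (p / 2)"
  define R where "R = (N2 / (4*S)) powr (p/2)"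
  have pos: "Q > 0" unfolding Q_def using S N2 by simp
  have QR: "Q * R = 1" using inv unfolding Q_def R_def .
  have "A * c\<^sup>2 \<le> \<mu> * (c powr p * R)"
    using hP Lp mu unfolding R_def by (meson mult_left_mono less_imp_le order_trans)
  hence "A * c\<^sup>2 * Q \<le> \<mu> * (c powr p * R) * Q"
    using pos by (simp add: mult_right_mono)
  also have "\<mu> * (c powr p * R) * Q = \<mu> * c powr p * (Q * R)" by (simp add: ac_simps)
  finally have "A * c\<^sup>2 * Q \<le> \<mu> * c powr p" using QR by simp
  hence "A * c\<^sup>2 * Q \<le> \<mu> * (c\<^sup>2 * c powr (p - 2))" by (simp only: A4[OF c, where p=p])
  hence "c\<^sup>2 * (A * Q) \<le> c\<^sup>2 * (\<mu> * c powr (p - 2))" by (simp add: ac_simps)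
  hence "A * Q \<le> \<mu> * c powr (p - 2)" using c by simp
  hence X: "A / \<mu> * Q \<le> c powr (p - 2)" using mu by (simp add: pos_divide_le_eq mult.commute)
  have "(A / \<mu> * Q) powr (1 / (p - 2)) \<le> (c powr (p - 2)) powr (1 / (p - 2))"
    by (rule powr_mono2[OF _ _ X]) (use A mu pos p2 in auto)
  also have "\<dots> = c" by (rule A5[OF c p2])
  finally show ?thesis unfolding Q_def .
qed
lemma grad_norm2_nonneg: "grad_norm2 v \<ge> 0"
  unfolding grad_norm2_def by (rule integral_nonneg_AE) auto

theorem lemma5p1:
  fixes u :: "'a::euclidean_space \<Rightarrow> real" and \<mu> c :: real and N :: nat
  assumes "N = DIM('a)" and "N \<ge> 3" and "\<mu> > 0" and "c > 0" and "u \<in> S_c c"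
  defines "k0 \<equiv> real N ^ 2 * c ^ 2 / 4"
      and "c0 \<equiv> ((real N ^ 2 - 2 * real N) / (4 * \<mu>)
                  * (4 * sobolev_S TYPE('a) / real N ^ 2) powr (crit_exp N / 2))
                 powr (1 / (crit_exp N - 2))"
  shows "(P_fun \<mu> c u \<le> 0 \<and> grad_norm2 u = k0 \<longrightarrow> c \<ge> c0)
       \<and> (P_fun \<mu> c u \<le> 0 \<and> c < c0 \<longrightarrow> grad_norm2 u \<noteq> k0)"
proof -
  define p where "p = crit_exp N"
  have N3: "real N \<ge> 3" using assms(2) by simp
  have p2: "p > 2" using N3 unfolding p_def crit_exp_def by (simp add: field_simps)
  have main: "c \<ge> c0" if hP: "P_fun \<mu> c u \<le> 0" and hg: "grad_norm2 u = k0"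
  proof -
    define L where "L = Lp_norm p u"
    define g where "g = grad_norm2 u"
    have P': "g - \<mu> * L powr p - real N / 2 * c\<^sup>2 \<le> 0"
      using hP unfolding P_fun_def L_def g_def p_def assms(1) by simp
    have L0: "L \<ge> 0" unfolding L_def Lp_norm_def by simp
    have Lnz: "L \<noteq> 0"
    proof
      assume "L = 0"
      hence "g \<le> real N / 2 * c\<^sup>2" using P' by simp
      moreover have "g = real N ^ 2 * c ^ 2 / 4" using hg k0_def g_def by simp
      ultimately have "real N * (real N * c\<^sup>2) \<le> 2 * (real N * c\<^sup>2)"
        by (simp add: power2_eq_square field_simps)
      moreover have "real N * c\<^sup>2 > 0" using N3 assms(4) by simp
      ultimately have "real N \<le> 2" using mult_le_cancel_right_pos by blast
      thus False using N3 by simp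
    qed
    hence Lpos: "L > 0" using L0 by simp
    have intg: "integrable lebesgue (\<lambda>x. \<bar>u x\<bar> powr p)"
    proof (rule ccontr)
      assume "\<not> ?thesis"
      hence "(\<integral>x. \<bar>u x\<bar> powr p \<partial>lebesgue) = 0" by (rule not_integrable_integral_eq)
      hence "L = 0" unfolding L_def Lp_norm_def by simp
      thus False using Lnz by simp
    qed
    have uW: "u \<in> H1" and uc: "Lp_norm 2 u = c" using assms(5) unfolding S_c_def W_space_def by auto
    then obtain G where G: "weak_grad u G \<and> G \<in> borel_measurable lebesgue
            \<and> integrable lebesgue (\<lambda>x. (norm (G x))\<^sup>2)" and m2: "memLp 2 u"
      unfolding H1_def by auto
    have uD: "u \<in> D12"
      unfolding D12_def memLp_def using G m2 intg unfolding memLp_def p_def assms(1)[symmetric]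
      by auto
    have nAE: "\<not> (AE x in lebesgue. u x = 0)"
    proof
      assume "AE x in lebesgue. u x = 0"
      hence "AE x in lebesgue. \<bar>u x\<bar> powr 2 = 0" by eventually_elim simp
      hence "(\<integral>x. \<bar>u x\<bar> powr 2 \<partial>lebesgue) = 0" by (rule integral_eq_zero_AE)
      hence "Lp_norm 2 u = 0" unfolding Lp_norm_def by simp
      thus False using uc assms(4) by simp
    qed
    define T where "T = {grad_norm2 v / (Lp_norm (crit_exp DIM('a)) v)\<^sup>2 | v :: 'a \<Rightarrow> real.
                     v \<in> D12 \<and> \<not> (AE x in lebesgue. v x = 0)}"
    have ST: "sobolev_S TYPE('a) = Inf T" unfolding sobolev_S_def T_def by simp
    have geq: "g / L\<^sup>2 = grad_norm2 u / (Lp_norm (crit_exp DIM('a)) u)\<^sup>2"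
      by (simp only: g_def L_def p_def assms(1))
    have inT: "g / L\<^sup>2 \<in> T" unfolding T_def geq using uD nAE by blast
    have bdd: "bdd_below T" unfolding T_def
      by (rule bdd_belowI[where m=0]) (auto intro: divide_nonneg_nonneg grad_norm2_nonneg)
    have Sle: "sobolev_S TYPE('a) \<le> g / L\<^sup>2" unfolding ST using inT bdd by (rule cInf_lower)
    have Sge: "sobolev_S TYPE('a) \<ge> 0" unfolding ST using inT
      by (intro cInf_greatest) (auto simp: T_def intro: divide_nonneg_nonneg grad_norm2_nonneg)
    show ?thesis
    proof (cases "sobolev_S TYPE('a) = 0")
      case True
      have z: "(4 * sobolev_S TYPE('a) / real N ^ 2) powr (crit_exp N / 2) = 0"
        unfolding True by simp
      have "c0 = 0" unfolding c0_def z by simp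
      thus ?thesis using assms(4) by simp
    next
      case False
      hence Spos: "sobolev_S TYPE('a) > 0" using Sge by simp
      have NN: "real N ^ 2 - 2 * real N = real N * (real N - 2)"
        by (simp add: power2_eq_square algebra_simps)
      have A: "(real N ^ 2 - 2 * real N) / 4 > 0" unfolding NN using N3 by simp
      have gk: "g = real N ^ 2 * c\<^sup>2 / 4" using hg unfolding g_def k0_def by simp
      have e1: "(real N ^ 2 - 2 * real N) / 4 * c\<^sup>2 = g - real N / 2 * c\<^sup>2"
        unfolding gk by (simp add: power2_eq_square field_simps)
      have hP2: "(real N ^ 2 - 2 * real N) / 4 * c\<^sup>2 \<le> \<mu> * L powr p"
        unfolding e1 using P' by linarith
      have N2: "real N ^ 2 > 0" using N3 by simp
      have fin: "((real N ^ 2 - 2 * real N) / 4 / \<mu> * (4 * sobolev_S TYPE('a) / real N ^ 2) powr (p / 2))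
             powr (1 / (p - 2)) \<le> c"
        by (rule key_ineq[OF p2 assms(4) Spos Lpos assms(3) A Sle gk N2 hP2])
      have e2: "(real N ^ 2 - 2 * real N) / 4 / \<mu> = (real N ^ 2 - 2 * real N) / (4 * \<mu>)" by simp
      show ?thesis using fin unfolding c0_def p_def e2 .
    qed
  qed
  show ?thesis using main by auto
qed

end
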